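(* Let $\mathcal{G}=\langle S,A,T,s_0,F\rangle$ be a two-player turn-based deterministic reachability game. For every subset $Z\subseteq\mathrm{Win}_2(\mathcal{G},F)\setminus F$, we have $\mathrm{DSWin}_1(Z,\emptyset)\subseteq\mathrm{DSWin}_1(\emptyset,Z)$.
   Context: A two-player turn-based deterministic reachability game is a tuple $\mathcal{G}=\langle S,A,T,s_0,F\rangle$: $S$ finite, partitioned into P1 states $S_1$ and P2 states $S_2$; $A=A_1\cup A_2$ (P1 and P2 actions); $T:(S_1\times A_1)\cup(S_2\times A_2)\to S$ deterministic, possibly partial ($a$ enabled at $s$ iff $T(s,a)$ defined; every state has an enabled action); $s_0$ initial; $F\subseteq S$ a set of sink states (P2's goal). For a target $R\subseteq S$: $Z_0=R$, $Z_{k+1}=Z_k\cup\{s\in S_1:T(s,a)\in Z_k\ \forall\text{ enabled }a\}\cup\{s\in S_2:T(s,a)\in Z_k\text{ for some enabled }a\}$; $\mathrm{Win}_2(\mathcal{G},R)=\bigcup_kZ_k$; $\mathrm{rank}_{\mathcal{G},R}(s)=\min\{k:s\in Z_k\}$ ($\infty$ if none). For disjoint $X,Y\subseteq\mathrm{Win}_2(\mathcal{G},F)\setminus F$ (traps $X$, fake targets $Y$): the true game $\mathcal{G}^1_{X,Y}$ has states $S$, transitions $T_{X,Y}(q,a)=T(q,a)$ if $q\notin X\cup Y$ and $T_{X,Y}(q,a)=q$ if $q\in X\cup Y$; P2's perceptual game $\mathcal{G}^2_{X,Y}$ has transitions $T$ and goal $F\cup Y$, with $\mathrm{rank}_{\mathcal{G}^2_{X,Y}}:=\mathrm{rank}_{\mathcal{G},F\cup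 Y}$. Subjectively rationalizable actions: for $q\in S_2\cap\mathrm{Win}_2(\mathcal{G},F)\setminus(F\cup Y)$, $\mathsf{SRActs}_{X,Y}(q)=\{a\text{ enabled}:\mathrm{rank}_{\mathcal{G}^2_{X,Y}}(T(q,a))<\mathrm{rank}_{\mathcal{G}^2_{X,Y}}(q)\}$; at every other state, all enabled actions. A memoryless deterministic strategy of either player is subjectively rationalizable if it picks an action in $\mathsf{SRActs}_{X,Y}(q)$ at each of that player's states $q$. A memoryless deterministic P1 strategy $\pi_1$ is stealthy deceptive sure winning at $s$ if it is subjectively rationalizable and, for every subjectively rationalizable memoryless deterministic P2 strategy $\pi_2$, every path from $s$ generated by $(\pi_1,\pi_2)$ in the true game $\mathcal{G}^1_{X,Y}$ visits $X\cup Y$ within finitely many steps. $\mathrm{DSWin}_1(X,Y)$ is the set of states at which P1 has a stealthy deceptive sure winning strategy. *)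

theory Defs
  imports Main "HOL-Library.Extended_Nat"
begin

text \<open>Two-player turn-based deterministic reachability game
  G = (S, A, T, s0, F), with S partitioned into S1 (P1) and S2 (P2),
  A = A1 \<union> A2, and a partial deterministic transition function T
  (None = action not enabled).\<close>

record ('s, 'a) game =
  St  :: "'s set"
  S1  :: "'s set"
  S2  :: "'s set"
  A1  :: "'a set"
  A2  :: "'a set"
  Tr  :: "'s \<Rightarrow> 'a \<Rightarrow> 's option"
  s0  :: "'s"
  Fin :: "'s set"

definition enabled :: "('s, 'a) game \<Rightarrow> 's \<Rightarrow> 'a \<Rightarrow> bool" where
  "enabled G s a \<longleftrightarrow> Tr G s a \<noteq> None"

definition wf_game :: "('s, 'a) game \<Rightarrow> bool" where
  "wf_game G \<longleftrightarrow>
     finite (St G) \<and> S1 G \<union> S2 G = St G \<and> S1 G \<inter> S2 G = {} \<and>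
     (\<forall>s a. Tr G s a \<noteq> None \<longrightarrow> (s \<in> S1 G \<and> a \<in> A1 G) \<or> (s \<in> S2 G \<and> a \<in> A2 G)) \<and>
     (\<forall>s a t. Tr G s a = Some t \<longrightarrow> t \<in> St G) \<and>
     (\<forall>s \<in> St G. \<exists>a. enabled G s a) \<and>
     s0 G \<in> St G \<and> Fin G \<subseteq> St G \<and>
     \<comment> \<open>states in F are sinks\<close>
     (\<forall>f \<in> Fin G. \<forall>a t. Tr G f a = Some t \<longrightarrow> t = f)"

fun attr :: "('s, 'a) game \<Rightarrow> 's set \<Rightarrow> nat \<Rightarrow> 's set" where
  "attr G R 0 = R"
| "attr G R (Suc k) = attr G R k
     \<union> {s \<in> S1 G. \<forall>a t. Tr G s a = Some t \<longrightarrow> t \<in> attr G R k}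
     \<union> {s \<in> S2 G. \<exists>a t. Tr G s a = Some t \<and> t \<in> attr G R k}"

definition Win2 :: "('s, 'a) game \<Rightarrow> 's set \<Rightarrow> 's set" where
  "Win2 G R = (\<Union>k. attr G R k)"

definition rank :: "('s, 'a) game \<Rightarrow> 's set \<Rightarrow> 's \<Rightarrow> enat" where
  "rank G R s = (if \<exists>k. s \<in> attr G R k then enat (LEAST k. s \<in> attr G R k) else \<infinity>)"

text \<open>Subjectively rationalizable actions (perceptual game: transitions T, goal F \<union> Y).\<close>
definition SRActs :: "('s, 'a) game \<Rightarrow> 's set \<Rightarrow> 's set \<Rightarrow> 's \<Rightarrow> 'a set" where
  "SRActs G X Y q =
     (if q \<in> S2 G \<inter> Win2 G (Fin G) - (Fin G \<union> Y)
      then {a. \<exists>t. Tr G q a = Some t \<and> rank G (Fin G \<union> Y) t < rank G (Fin G \<union> Y) q}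
      else {a. enabled G q a})"

definition sr_strategy1 :: "('s, 'a) game \<Rightarrow> 's set \<Rightarrow> 's set \<Rightarrow> ('s \<Rightarrow> 'a) \<Rightarrow> bool" where
  "sr_strategy1 G X Y \<pi> \<longleftrightarrow> (\<forall>q \<in> S1 G. \<pi> q \<in> SRActs G X Y q)"

definition sr_strategy2 :: "('s, 'a) game \<Rightarrow> 's set \<Rightarrow> 's set \<Rightarrow> ('s \<Rightarrow> 'a) \<Rightarrow> bool" where
  "sr_strategy2 G X Y \<pi> \<longleftrightarrow> (\<forall>q \<in> S2 G. \<pi> q \<in> SRActs G X Y q)"

definition Tr_true :: "('s, 'a) game \<Rightarrow> 's set \<Rightarrow> 's set \<Rightarrow> 's \<Rightarrow> 'a \<Rightarrow> 's option" where
  "Tr_true G X Y q a =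
     (if q \<in> X \<union> Y then (if enabled G q a then Some q else None) else Tr G q a)"

definition is_play :: "('s, 'a) game \<Rightarrow> 's set \<Rightarrow> 's set \<Rightarrow> ('s \<Rightarrow> 'a) \<Rightarrow> ('s \<Rightarrow> 'a)
                        \<Rightarrow> 's \<Rightarrow> (nat \<Rightarrow> 's) \<Rightarrow> bool" where
  "is_play G X Y \<pi>1 \<pi>2 s \<rho> \<longleftrightarrow>
     \<rho> 0 = s \<and>
     (\<forall>n. Tr_true G X Y (\<rho> n) ((if \<rho> n \<in> S1 G then \<pi>1 else \<pi>2) (\<rho> n)) = Some (\<rho> (Suc n)))"

definition stealthy_dsw :: "('s, 'a) game \<Rightarrow> 's set \<Rightarrow> 's set \<Rightarrow> ('s \<Rightarrow> 'a) \<Rightarrow> 's \<Rightarrow> bool" where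
  "stealthy_dsw G X Y \<pi>1 s \<longleftrightarrow>
     sr_strategy1 G X Y \<pi>1 \<and>
     (\<forall>\<pi>2. sr_strategy2 G X Y \<pi>2 \<longrightarrow>
        (\<forall>\<rho>. is_play G X Y \<pi>1 \<pi>2 s \<rho> \<longrightarrow> (\<exists>n. \<rho> n \<in> X \<union> Y)))"

definition DSWin1 :: "('s, 'a) game \<Rightarrow> 's set \<Rightarrow> 's set \<Rightarrow> 's set" where
  "DSWin1 G X Y = {s \<in> St G. \<exists>\<pi>1. stealthy_dsw G X Y \<pi>1 s}"

end

theory Submission
  imports Defs
begin

fun Bl :: "('s, 'a) game \<Rightarrow> 's set \<Rightarrow> nat \<Rightarrow> 's set" where
  "Bl G Z 0 = Z"
| "Bl G Z (Suc k) = Bl G Z k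
     \<union> {x \<in> S1 G. \<exists>a t. Tr G x a = Some t \<and> t \<in> Bl G Z k}
     \<union> {x \<in> S2 G. \<forall>a t. a \<in> SRActs G {} Z x \<and> Tr G x a = Some t \<longrightarrow> t \<in> Bl G Z k}"

definition BB :: "('s, 'a) game \<Rightarrow> 's set \<Rightarrow> 's set" where
  "BB G Z = (\<Union>k. Bl G Z k)"

lemma attr_mono: "k \<le> m \<Longrightarrow> attr G R k \<subseteq> attr G R m"
  by (rule lift_Suc_mono_le[of "attr G R"]) auto

lemma Bl_mono: "k \<le> m \<Longrightarrow> Bl G Z k \<subseteq> Bl G Z m"
  by (rule lift_Suc_mono_le[of "Bl G Z"]) auto

lemma finite_bound:
  assumes "finite A" "\<forall>t\<in>A. \<exists>k. t \<in> f k" "\<And>k m. k \<le> m \<Longrightarrow> f k \<subseteq> f m"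
  shows "\<exists>K. A \<subseteq> f (K::nat)"
  using assms(1,2)
proof (induction A rule: finite_induct)
  case empty then show ?case by auto
next
  case (insert x A)
  then obtain K where K: "A \<subseteq> f K" by auto
  from insert obtain k where k: "x \<in> f k" by auto
  have "A \<subseteq> f (max K k)" using K assms(3)[of K "max K k"] by auto
  moreover have "x \<in> f (max K k)" using k assms(3)[of k "max K k"] by auto
  ultimately show ?case by blast
qed

lemma attr_R_mono: "R \<subseteq> R' \<Longrightarrow> attr G R k \<subseteq> attr G R' k"
proof (induction k)
  case (Suc k)
  then show ?case by (simp; blast)
qed simp

lemma attr_shift: "R \<subseteq> attr G R' M \<Longrightarrow> attr G R k \<subseteq> attr G R' (M + k)"
proof (induction k)
  case (Suc k)
  then show ?case by (simp; blast)
qed simp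

lemma wf_succ: "wf_game G \<Longrightarrow> Tr G s a = Some t \<Longrightarrow> t \<in> St G"
  unfolding wf_game_def by (elim conjE) blast

lemma wf_finite: "wf_game G \<Longrightarrow> finite (St G)"
  unfolding wf_game_def by (elim conjE) assumption

lemma wf_disj: "wf_game G \<Longrightarrow> x \<in> S1 G \<Longrightarrow> x \<notin> S2 G"
  unfolding wf_game_def by (elim conjE) blast

lemma wf_union: "wf_game G \<Longrightarrow> x \<in> St G \<Longrightarrow> x \<in> S1 G \<or> x \<in> S2 G"
  unfolding wf_game_def by (elim conjE) blast

lemma wf_S1: "wf_game G \<Longrightarrow> x \<in> S1 G \<Longrightarrow> x \<in> St G"
  unfolding wf_game_def by (elim conjE) blast

lemma wf_S2: "wf_game G \<Longrightarrow> x \<in> S2 G \<Longrightarrow> x \<in> St G"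
  unfolding wf_game_def by (elim conjE) blast

lemma wf_en: "wf_game G \<Longrightarrow> x \<in> St G \<Longrightarrow> \<exists>a. enabled G x a"
  unfolding wf_game_def by (elim conjE) blast

lemma wf_Fin: "wf_game G \<Longrightarrow> Fin G \<subseteq> St G"
  unfolding wf_game_def by (elim conjE) assumption

lemma attr_St: "wf_game G \<Longrightarrow> attr G (Fin G) k \<subseteq> St G"
proof (induction k)
  case 0 then show ?case using wf_Fin by simp
next
  case (Suc k)
  then show ?case using wf_S1[of G] wf_S2[of G] by auto
qed

lemma rank_le_iff: "rank G R x \<le> enat k \<longleftrightarrow> x \<in> attr G R k"
proof
  assume A: "rank G R x \<le> enat k"
  have ex: "\<exists>k. x \<in> attr G R k"
  proof (rule ccontr)
    assume "\<not> (\<exists>k. x \<in> attr G R k)"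
    then have "rank G R x = \<infinity>" unfolding rank_def by simp
    with A show False by simp
  qed
  then have "rank G R x = enat (LEAST k. x \<in> attr G R k)" unfolding rank_def by simp
  with A have le: "(LEAST k. x \<in> attr G R k) \<le> k" by simp
  from ex have "x \<in> attr G R (LEAST k. x \<in> attr G R k)" by (rule LeastI_ex)
  with attr_mono[OF le, of G R] show "x \<in> attr G R k" by blast
next
  assume B: "x \<in> attr G R k"
  then have "rank G R x = enat (LEAST k. x \<in> attr G R k)" unfolding rank_def by auto
  moreover have "(LEAST k. x \<in> attr G R k) \<le> k" using B by (rule Least_le)
  ultimately show "rank G R x \<le> enat k" by simp
qed

lemma Z_bound:
  assumes "wf_game G" "Z \<subseteq> Win2 G (Fin G) - Fin G"
  shows "\<exists>M. attr G (Fin G \<union> Z) k \<subseteq> attr G (Fin G) (M + k)"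
proof -
  have "Win2 G (Fin G) \<subseteq> St G" using attr_St[OF assms(1)] unfolding Win2_def by blast
  then have "Z \<subseteq> St G" using assms(2) by blast
  moreover have "finite (St G)" using wf_finite[OF assms(1)] .
  ultimately have "finite Z" by (rule finite_subset)
  moreover have "\<forall>t\<in>Z. \<exists>k. t \<in> attr G (Fin G) k" using assms(2) unfolding Win2_def by blast
  ultimately obtain M where M: "Z \<subseteq> attr G (Fin G) M"
    using finite_bound[of Z "attr G (Fin G)"] attr_mono by metis
  have "Fin G \<subseteq> attr G (Fin G) 0" by simp
  then have "Fin G \<subseteq> attr G (Fin G) M" using attr_mono[of 0 M G "Fin G"] by blast
  with M have "Fin G \<union> Z \<subseteq> attr G (Fin G) M" by blast
  then have "attr G (Fin G \<union> Z) k \<subseteq> attr G (Fin G) (M + k)" by (rule attr_shift)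
  then show ?thesis by (rule exI)
qed

lemma BB_S1: "x \<in> S1 G \<Longrightarrow> Tr G x a = Some t \<Longrightarrow> t \<in> BB G Z \<Longrightarrow> x \<in> BB G Z"
  unfolding BB_def
proof -
  assume "x \<in> S1 G" "Tr G x a = Some t" "t \<in> (\<Union>k. Bl G Z k)"
  then obtain k where "t \<in> Bl G Z k" by blast
  then have "x \<in> Bl G Z (Suc k)" using \<open>x \<in> S1 G\<close> \<open>Tr G x a = Some t\<close> by auto
  then show "x \<in> (\<Union>k. Bl G Z k)" by blast
qed

lemma BB_S2:
  assumes "wf_game G" "x \<in> S2 G"
    "\<forall>a t. a \<in> SRActs G {} Z x \<and> Tr G x a = Some t \<longrightarrow> t \<in> BB G Z"
  shows "x \<in> BB G Z"
proof -
  let ?A = "{t. \<exists>a. a \<in> SRActs G {} Z x \<and> Tr G x a = Some t}"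
  have "?A \<subseteq> St G" using wf_succ[OF assms(1)] by blast
  moreover have "finite (St G)" using wf_finite[OF assms(1)] .
  ultimately have "finite ?A" by (rule finite_subset)
  moreover have "\<forall>t\<in>?A. \<exists>k. t \<in> Bl G Z k" using assms(3) unfolding BB_def by blast
  ultimately obtain K where K: "?A \<subseteq> Bl G Z K"
    using finite_bound[of ?A "Bl G Z", OF _ _ Bl_mono] by blast
  have "x \<in> Bl G Z (Suc K)" using K assms(2) by auto
  then show ?thesis unfolding BB_def by blast
qed

lemma Z_in_BB: "Z \<subseteq> BB G Z"
proof
  fix z assume "z \<in> Z"
  then have "z \<in> Bl G Z 0" by simp
  then show "z \<in> BB G Z" unfolding BB_def by blast
qed

lemma claim:
  assumes wf: "wf_game G" and Zs: "Z \<subseteq> Win2 G (Fin G) - Fin G"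
  shows "y \<notin> BB G Z \<Longrightarrow> y \<in> attr G (Fin G \<union> Z) k \<Longrightarrow> y \<in> attr G (Fin G) k"
proof (induction k arbitrary: y)
  case 0
  then show ?case using Z_in_BB[of Z G] by auto
next
  case (Suc k)
  note yB = Suc.prems(1)
  show ?case
  proof (cases "y \<in> attr G (Fin G \<union> Z) k")
    case True
    then show ?thesis using Suc.IH yB by auto
  next
    case False
    then have yS: "(y \<in> S1 G \<and> (\<forall>a t. Tr G y a = Some t \<longrightarrow> t \<in> attr G (Fin G \<union> Z) k))
       \<or> (y \<in> S2 G)" using Suc.prems(2) by auto
    show ?thesis
    proof (cases "y \<in> S1 G")
      case True
      then have "\<forall>a t. Tr G y a = Some t \<longrightarrow> t \<in> attr G (Fin G \<union> Z) k"
        using yS wf_disj[OF wf] by blast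
      moreover have "\<forall>a t. Tr G y a = Some t \<longrightarrow> t \<notin> BB G Z"
        using BB_S1[OF True] yB by blast
      ultimately have "\<forall>a t. Tr G y a = Some t \<longrightarrow> t \<in> attr G (Fin G) k"
        using Suc.IH by blast
      then show ?thesis using True by simp
    next
      case False
      with yS have y2: "y \<in> S2 G" by blast
      show ?thesis
      proof (cases "y \<in> Fin G")
        case True
        then have "y \<in> attr G (Fin G) 0" by simp
        then show ?thesis using attr_mono[of 0 "Suc k" G "Fin G"] by blast
      next
        case yF: False
        obtain M where M: "attr G (Fin G \<union> Z) (Suc k) \<subseteq> attr G (Fin G) (M + Suc k)"
          using Z_bound[OF wf Zs, of "Suc k"] by (elim exE)
        have "y \<in> attr G (Fin G) (M + Suc k)" using M Suc.prems(2) by (rule subsetD)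
        then have yW: "y \<in> Win2 G (Fin G)" unfolding Win2_def by (rule UN_I[OF UNIV_I])
        have yZ: "y \<notin> Z" using yB Z_in_BB[of Z G] by blast
        have "\<not> (\<forall>a t. a \<in> SRActs G {} Z y \<and> Tr G y a = Some t \<longrightarrow> t \<in> BB G Z)"
        proof
          assume "\<forall>a t. a \<in> SRActs G {} Z y \<and> Tr G y a = Some t \<longrightarrow> t \<in> BB G Z"
          then have "y \<in> BB G Z" by (rule BB_S2[OF wf y2])
          with yB show False by contradiction
        qed
        then obtain a t where a: "a \<in> SRActs G {} Z y" "Tr G y a = Some t" "t \<notin> BB G Z"
          by blast
        have cond: "y \<in> S2 G \<inter> Win2 G (Fin G) - (Fin G \<union> Z)" using y2 yW yF yZ by blast
        have "\<exists>t'. Tr G y a = Some t' \<and> rank G (Fin G \<union> Z) t' < rank G (Fin G \<union> Z) y"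
          using a(1) cond unfolding SRActs_def by simp
        then have "rank G (Fin G \<union> Z) t < rank G (Fin G \<union> Z) y" using a(2) by auto
        moreover have "rank G (Fin G \<union> Z) y \<le> enat (Suc k)"
          using rank_le_iff[THEN iffD2, OF Suc.prems(2)] .
        ultimately have "rank G (Fin G \<union> Z) t < enat (Suc k)" by (rule less_le_trans)
        then have "rank G (Fin G \<union> Z) t \<le> enat k"
          by (cases "rank G (Fin G \<union> Z) t") auto
        then have "t \<in> attr G (Fin G \<union> Z) k" by (rule rank_le_iff[THEN iffD1])
        then have "t \<in> attr G (Fin G) k" by (rule Suc.IH[OF a(3)])
        then show ?thesis using y2 a(2) by auto
      qed
    qed
  qed
qed

lemma rank_F_le_FZ:
  assumes wf: "wf_game G" and Zs: "Z \<subseteq> Win2 G (Fin G) - Fin G" and tB: "t \<notin> BB G Z"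
  shows "rank G (Fin G) t \<le> rank G (Fin G \<union> Z) t"
proof (cases "rank G (Fin G \<union> Z) t")
  case (enat j)
  then have "rank G (Fin G \<union> Z) t \<le> enat j" by simp
  then have "t \<in> attr G (Fin G \<union> Z) j" by (rule rank_le_iff[THEN iffD1])
  then have "t \<in> attr G (Fin G) j" using claim[OF wf Zs tB] by blast
  then have "rank G (Fin G) t \<le> enat j" by (rule rank_le_iff[THEN iffD2])
  then show ?thesis using enat by simp
qed simp

lemma rank_FZ_le_F: "rank G (Fin G \<union> Z) x \<le> rank G (Fin G) x"
proof (cases "rank G (Fin G) x")
  case (enat j)
  then have "rank G (Fin G) x \<le> enat j" by simp
  then have "x \<in> attr G (Fin G) j" by (rule rank_le_iff[THEN iffD1])
  then have "x \<in> attr G (Fin G \<union> Z) j" using attr_R_mono[of "Fin G" "Fin G \<union> Z"] by blast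
  then have "rank G (Fin G \<union> Z) x \<le> enat j" by (rule rank_le_iff[THEN iffD2])
  then show ?thesis using enat by simp
qed simp

lemma key:
  assumes wf: "wf_game G" and Zs: "Z \<subseteq> Win2 G (Fin G) - Fin G"
    and x2: "x \<in> S2 G" and xB: "x \<notin> BB G Z"
  shows "\<exists>a t. a \<in> SRActs G Z {} x \<and> Tr G x a = Some t \<and> t \<notin> BB G Z"
proof -
  obtain a t where a: "a \<in> SRActs G {} Z x" "Tr G x a = Some t" "t \<notin> BB G Z"
    using BB_S2[OF wf x2] xB by blast
  have xZ: "x \<notin> Z" using xB Z_in_BB[of Z G] by blast
  show ?thesis
  proof (cases "x \<in> S2 G \<inter> Win2 G (Fin G) - Fin G")
    case True
    then have cond: "x \<in> S2 G \<inter> Win2 G (Fin G) - (Fin G \<union> Z)" using xZ by blast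
    have "\<exists>t'. Tr G x a = Some t' \<and> rank G (Fin G \<union> Z) t' < rank G (Fin G \<union> Z) x"
      using a(1) cond unfolding SRActs_def by simp
    then have lt: "rank G (Fin G \<union> Z) t < rank G (Fin G \<union> Z) x" using a(2) by auto
    have "rank G (Fin G) t \<le> rank G (Fin G \<union> Z) t" by (rule rank_F_le_FZ[OF wf Zs a(3)])
    also note lt
    also have "rank G (Fin G \<union> Z) x \<le> rank G (Fin G) x" by (rule rank_FZ_le_F)
    finally have "rank G (Fin G) t < rank G (Fin G) x" .
    then have "a \<in> SRActs G Z {} x" using True a(2) unfolding SRActs_def by auto
    then show ?thesis using a by blast
  next
    case False
    then have "a \<in> SRActs G Z {} x" using a(1) unfolding SRActs_def by (auto split: if_splits)
    then show ?thesis using a by blast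
  qed
qed

lemma SR_nonempty:
  assumes wf: "wf_game G" and x2: "x \<in> S2 G"
  shows "\<exists>a t. a \<in> SRActs G Z {} x \<and> Tr G x a = Some t"
proof (cases "x \<in> S2 G \<inter> Win2 G (Fin G) - Fin G")
  case True
  then obtain k where k: "x \<in> attr G (Fin G) k" unfolding Win2_def by blast
  define j where "j = (LEAST k. x \<in> attr G (Fin G) k)"
  have xj: "x \<in> attr G (Fin G) j" unfolding j_def using k by (rule LeastI)
  have rk: "rank G (Fin G) x = enat j" unfolding rank_def j_def using k by auto
  have "j \<noteq> 0"
  proof
    assume "j = 0"
    then have "x \<in> Fin G" using xj by simp
    then show False using True by blast
  qed
  then obtain i where i: "j = Suc i" by (cases j) auto
  have "i < j" using i by simp
  then have "x \<notin> attr G (Fin G) i" unfolding j_def by (rule not_less_Least)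
  moreover have "x \<notin> S1 G" using x2 wf_disj[OF wf] by blast
  moreover have "x \<in> attr G (Fin G) i \<or> (x \<in> S1 G \<and> (\<forall>a t. Tr G x a = Some t \<longrightarrow> t \<in> attr G (Fin G) i))
      \<or> (x \<in> S2 G \<and> (\<exists>a t. Tr G x a = Some t \<and> t \<in> attr G (Fin G) i))"
    using xj unfolding i by simp
  ultimately obtain a t where a: "Tr G x a = Some t" "t \<in> attr G (Fin G) i"
    by blast
  have "rank G (Fin G) t \<le> enat i" using a(2) by (rule rank_le_iff[THEN iffD2])
  then have "rank G (Fin G) t < enat (Suc i)" by (cases "rank G (Fin G) t") auto
  then have "rank G (Fin G) t < rank G (Fin G) x" using rk i by simp
  then show ?thesis using a True unfolding SRActs_def by auto
next
  case False
  obtain a where "enabled G x a" using wf_en[OF wf wf_S2[OF wf x2]] by blast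
  then show ?thesis using False unfolding SRActs_def enabled_def by auto
qed

lemma lose:
  assumes wf: "wf_game G" and Zs: "Z \<subseteq> Win2 G (Fin G) - Fin G"
    and sS: "s \<in> St G" and sB: "s \<notin> BB G Z" and p1: "sr_strategy1 G Z {} \<pi>1"
  shows "\<not> stealthy_dsw G Z {} \<pi>1 s"
proof -
  define \<pi>2 where "\<pi>2 x = (if x \<notin> BB G Z
      then SOME a. a \<in> SRActs G Z {} x \<and> (\<exists>t. Tr G x a = Some t \<and> t \<notin> BB G Z)
      else SOME a. \<exists>t. a \<in> SRActs G Z {} x \<and> Tr G x a = Some t)" for x
  have p2B: "\<pi>2 x \<in> SRActs G Z {} x \<and> (\<exists>t. Tr G x (\<pi>2 x) = Some t \<and> t \<notin> BB G Z)"
    if "x \<in> S2 G" "x \<notin> BB G Z" for x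
  proof -
    have "\<exists>a. a \<in> SRActs G Z {} x \<and> (\<exists>t. Tr G x a = Some t \<and> t \<notin> BB G Z)"
      using key[OF wf Zs that] by blast
    from someI_ex[OF this] show ?thesis unfolding \<pi>2_def using that(2) by simp
  qed
  have sr2: "sr_strategy2 G Z {} \<pi>2"
    unfolding sr_strategy2_def
  proof
    fix q assume q: "q \<in> S2 G"
    show "\<pi>2 q \<in> SRActs G Z {} q"
    proof (cases "q \<in> BB G Z")
      case True
      have "\<exists>a. \<exists>t. a \<in> SRActs G Z {} q \<and> Tr G q a = Some t" using SR_nonempty[OF wf q] by blast
      from someI_ex[OF this] show ?thesis unfolding \<pi>2_def using True by auto
    next
      case False
      then show ?thesis using p2B q by blast
    qed
  qed
  define act where "act x = (if x \<in> S1 G then \<pi>1 else \<pi>2) x" for x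
  define f where "f x = the (Tr_true G Z {} x (act x))" for x
  define \<rho> where "\<rho> n = (f ^^ n) s" for n
  have step: "Tr_true G Z {} x (act x) = Some (f x) \<and> f x \<in> St G \<and> f x \<notin> BB G Z"
    if "x \<in> St G" "x \<notin> BB G Z" for x
  proof -
    have xZ: "x \<notin> Z" using that(2) Z_in_BB[of Z G] by blast
    have TT: "Tr_true G Z {} x b = Tr G x b" for b using xZ unfolding Tr_true_def by simp
    have "\<exists>t. Tr G x (act x) = Some t \<and> t \<notin> BB G Z"
    proof (cases "x \<in> S1 G")
      case True
      then have "x \<notin> S2 G" using wf_disj[OF wf] by blast
      moreover have "\<pi>1 x \<in> SRActs G Z {} x" using p1 True unfolding sr_strategy1_def by blast
      ultimately have "enabled G x (\<pi>1 x)" unfolding SRActs_def by simp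
      then obtain t where t: "Tr G x (\<pi>1 x) = Some t" unfolding enabled_def by blast
      then have "t \<notin> BB G Z" using BB_S1[OF True t] that(2) by blast
      then show ?thesis using t True unfolding act_def by simp
    next
      case False
      then have "x \<in> S2 G" using wf_union[OF wf that(1)] by blast
      then show ?thesis using p2B[of x] that(2) False unfolding act_def by simp
    qed
    then obtain t where t: "Tr G x (act x) = Some t" "t \<notin> BB G Z" by blast
    have "t \<in> St G" using wf_succ[OF wf t(1)] .
    then show ?thesis using t TT unfolding f_def by simp
  qed
  have inv: "\<rho> n \<in> St G \<and> \<rho> n \<notin> BB G Z" for n
  proof (induction n)
    case 0 then show ?case using sS sB unfolding \<rho>_def by simp
  next
    case (Suc n)
    have "\<rho> (Suc n) = f (\<rho> n)" unfolding \<rho>_def by simp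
    then show ?case using step[of "\<rho> n"] Suc by simp
  qed
  have play: "is_play G Z {} \<pi>1 \<pi>2 s \<rho>"
    unfolding is_play_def
  proof
    show "\<rho> 0 = s" unfolding \<rho>_def by simp
    show "\<forall>n. Tr_true G Z {} (\<rho> n) ((if \<rho> n \<in> S1 G then \<pi>1 else \<pi>2) (\<rho> n)) = Some (\<rho> (Suc n))"
    proof
      fix n
      have "\<rho> (Suc n) = f (\<rho> n)" unfolding \<rho>_def by simp
      then show "Tr_true G Z {} (\<rho> n) ((if \<rho> n \<in> S1 G then \<pi>1 else \<pi>2) (\<rho> n)) = Some (\<rho> (Suc n))"
      proof -
        have "Tr_true G Z {} (\<rho> n) (act (\<rho> n)) = Some (f (\<rho> n))" using step[of "\<rho> n"] inv[of n] by blast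
        then show ?thesis using \<open>\<rho> (Suc n) = f (\<rho> n)\<close> by (simp add: act_def)
      qed
    qed
  qed
  have "\<forall>n. \<rho> n \<notin> Z \<union> {}" using inv Z_in_BB[of Z G] by blast
  show ?thesis
  proof
    assume "stealthy_dsw G Z {} \<pi>1 s"
    then have "\<forall>\<rho>. is_play G Z {} \<pi>1 \<pi>2 s \<rho> \<longrightarrow> (\<exists>n. \<rho> n \<in> Z \<union> {})"
      using sr2 unfolding stealthy_dsw_def by blast
    then show False using play \<open>\<forall>n. \<rho> n \<notin> Z \<union> {}\<close> by blast
  qed
qed


definition lvl :: "('s, 'a) game \<Rightarrow> 's set \<Rightarrow> 's \<Rightarrow> nat" where
  "lvl G Z x = (LEAST k. x \<in> Bl G Z k)"

definition pw :: "('s, 'a) game \<Rightarrow> 's set \<Rightarrow> 's \<Rightarrow> 'a" where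
  "pw G Z x = (if \<exists>a t. Tr G x a = Some t \<and> t \<in> Bl G Z (lvl G Z x - 1)
     then SOME a. \<exists>t. Tr G x a = Some t \<and> t \<in> Bl G Z (lvl G Z x - 1)
     else SOME a. enabled G x a)"

lemma Bl_sub: "x \<in> Bl G Z k \<Longrightarrow> x \<in> Z \<or> x \<in> S1 G \<or> x \<in> S2 G"
  by (induction k) auto

lemma lvl_facts:
  assumes "x \<in> Bl G Z k" "x \<notin> Z"
  obtains i where "lvl G Z x = Suc i" "Suc i \<le> k" "x \<in> Bl G Z (Suc i)" "x \<notin> Bl G Z i"
proof -
  have xl: "x \<in> Bl G Z (lvl G Z x)" unfolding lvl_def using assms(1) by (rule LeastI)
  have le: "lvl G Z x \<le> k" unfolding lvl_def using assms(1) by (rule Least_le)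
  have "lvl G Z x \<noteq> 0"
  proof
    assume "lvl G Z x = 0"
    with xl have "x \<in> Z" by simp
    with assms(2) show False by contradiction
  qed
  then obtain i where i: "lvl G Z x = Suc i" by (cases "lvl G Z x") auto
  have "i < lvl G Z x" using i by simp
  then have "x \<notin> Bl G Z i" unfolding lvl_def by (rule not_less_Least)
  then show ?thesis using that i le xl by simp
qed

lemma step1:
  assumes "x \<in> Bl G Z k" "x \<notin> Z" "x \<in> S1 G" "Tr G x (pw G Z x) = Some y" and wf: "wf_game G"
  shows "y \<in> Bl G Z (k - 1)"
proof -
  obtain i where i: "lvl G Z x = Suc i" "Suc i \<le> k" "x \<in> Bl G Z (Suc i)" "x \<notin> Bl G Z i"
    using lvl_facts[OF assms(1,2)] by blast
  moreover have "x \<notin> S2 G" using wf_disj[OF wf assms(3)] .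
  ultimately have ex: "\<exists>a t. Tr G x a = Some t \<and> t \<in> Bl G Z (lvl G Z x - 1)" by auto
  then have "\<exists>t. Tr G x (pw G Z x) = Some t \<and> t \<in> Bl G Z (lvl G Z x - 1)"
    unfolding pw_def using someI_ex[of "\<lambda>a. \<exists>t. Tr G x a = Some t \<and> t \<in> Bl G Z (lvl G Z x - 1)"]
    by simp
  then have "y \<in> Bl G Z i" using assms(4) i(1) by auto
  moreover have "i \<le> k - 1" using i(2) by simp
  ultimately show ?thesis using Bl_mono[of i "k - 1" G Z] by blast
qed

lemma step2:
  assumes "x \<in> Bl G Z k" "x \<notin> Z" "x \<notin> S1 G" "a \<in> SRActs G {} Z x" "Tr G x a = Some y"
  shows "y \<in> Bl G Z (k - 1)"
proof -
  obtain i where i: "lvl G Z x = Suc i" "Suc i \<le> k" "x \<in> Bl G Z (Suc i)" "x \<notin> Bl G Z i"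
    using lvl_facts[OF assms(1,2)] by blast
  then have "y \<in> Bl G Z i" using assms(3,4,5) by auto
  moreover have "i \<le> k - 1" using i(2) by simp
  ultimately show ?thesis using Bl_mono[of i "k - 1" G Z] by blast
qed

lemma win:
  assumes wf: "wf_game G" and sB: "s \<in> BB G Z"
  shows "stealthy_dsw G {} Z (pw G Z) s"
  unfolding stealthy_dsw_def
proof (intro conjI allI impI)
  show "sr_strategy1 G {} Z (pw G Z)"
    unfolding sr_strategy1_def
  proof
    fix q assume q: "q \<in> S1 G"
    then have q2: "q \<notin> S2 G" and qS: "q \<in> St G" using wf_disj[OF wf] wf_S1[OF wf] by blast+
    have "enabled G q (pw G Z q)"
    proof (cases "\<exists>a t. Tr G q a = Some t \<and> t \<in> Bl G Z (lvl G Z q - 1)")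
      case True
      have eq: "pw G Z q = (SOME a. \<exists>t. Tr G q a = Some t \<and> t \<in> Bl G Z (lvl G Z q - 1))"
        unfolding pw_def by (rule if_P[OF True])
      from True have "\<exists>a. \<exists>t. Tr G q a = Some t \<and> t \<in> Bl G Z (lvl G Z q - 1)" by blast
      from someI_ex[OF this] show ?thesis unfolding eq[symmetric] enabled_def by auto
    next
      case False
      have "\<exists>a. enabled G q a" using wf_en[OF wf qS] .
      have eq: "pw G Z q = (SOME a. enabled G q a)"
        unfolding pw_def by (rule if_not_P[OF False])
      from someI_ex[OF \<open>\<exists>a. enabled G q a\<close>] show ?thesis unfolding eq .
    qed
    then show "pw G Z q \<in> SRActs G {} Z q" using q2 unfolding SRActs_def by simp
  qed
next
  fix \<pi>2 \<rho>
  assume p2: "sr_strategy2 G {} Z \<pi>2" and pl: "is_play G {} Z (pw G Z) \<pi>2 s \<rho>"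
  obtain K where K: "s \<in> Bl G Z K" using sB unfolding BB_def by blast
  show "\<exists>n. \<rho> n \<in> {} \<union> Z"
  proof (rule ccontr)
    assume nZ: "\<not> (\<exists>n. \<rho> n \<in> {} \<union> Z)"
    have "\<rho> n \<in> Bl G Z (K - n)" for n
    proof (induction n)
      case 0 then show ?case using K pl unfolding is_play_def by simp
    next
      case (Suc n)
      have xZ: "\<rho> n \<notin> Z" using nZ by blast
      have tr: "Tr G (\<rho> n) ((if \<rho> n \<in> S1 G then pw G Z else \<pi>2) (\<rho> n)) = Some (\<rho> (Suc n))"
      proof -
        have t0: "Tr_true G {} Z (\<rho> n) ((if \<rho> n \<in> S1 G then pw G Z else \<pi>2) (\<rho> n)) = Some (\<rho> (Suc n))"
          using pl unfolding is_play_def by blast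
        have TT: "Tr_true G {} Z (\<rho> n) b = Tr G (\<rho> n) b" for b using xZ unfolding Tr_true_def by simp
        show ?thesis using t0 unfolding TT .
      qed
      show ?case
      proof (cases "\<rho> n \<in> S1 G")
        case True
        have "Tr G (\<rho> n) (pw G Z (\<rho> n)) = Some (\<rho> (Suc n))" using tr True by simp
        then have "\<rho> (Suc n) \<in> Bl G Z (K - n - 1)" by (rule step1[OF Suc xZ True _ wf])
        moreover have "K - n - 1 = K - Suc n" by simp
        ultimately show ?thesis by simp
      next
        case False
        then have "\<rho> n \<in> S2 G" using Bl_sub[OF Suc] xZ by blast
        then have "\<pi>2 (\<rho> n) \<in> SRActs G {} Z (\<rho> n)" using p2 unfolding sr_strategy2_def by blast
        moreover have "Tr G (\<rho> n) (\<pi>2 (\<rho> n)) = Some (\<rho> (Suc n))" using tr False by simp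
        ultimately have "\<rho> (Suc n) \<in> Bl G Z (K - n - 1)" by (rule step2[OF Suc xZ False])
        moreover have "K - n - 1 = K - Suc n" by simp
        ultimately show ?thesis by simp
      qed
    qed
    from this[of K] have "\<rho> K \<in> Z" by simp
    then show False using nZ by blast
  qed
qed

theorem theorem2:
  fixes G :: "('s, 'a) game" and Z :: "'s set"
  assumes "wf_game G"
    and "Z \<subseteq> Win2 G (Fin G) - Fin G"
  shows "DSWin1 G Z {} \<subseteq> DSWin1 G {} Z"
proof
  fix s assume "s \<in> DSWin1 G Z {}"
  then obtain \<pi>1 where sS: "s \<in> St G" and st: "stealthy_dsw G Z {} \<pi>1 s"
    unfolding DSWin1_def by blast
  have "s \<in> BB G Z"
  proof (rule ccontr)
    assume "s \<notin> BB G Z"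
    moreover have "sr_strategy1 G Z {} \<pi>1" using st unfolding stealthy_dsw_def by blast
    ultimately show False using lose[OF assms sS] st by blast
  qed
  then have "stealthy_dsw G {} Z (pw G Z) s" using win[OF assms(1)] by blast
  then show "s \<in> DSWin1 G {} Z" unfolding DSWin1_def using sS by blast
qed

end
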